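(* Let $(\Omega,\mathcal{A})$ be a measurable space with a $\sigma$-finite measure $\mu$, $\pi$ a probability density with respect to $\mu$, and $q_1,\dots,q_D$ transition densities (for each $x$, $q_d(x,\cdot)$ is a probability density with respect to $\mu$). Write $\bar\pi=\pi\otimes\pi$ and $(X,X')\sim\bar\pi$. Assume (A1): for every $d$, $\bar\pi\{(x,x'):q_d(x,x')=0\}=0$; (A2): for every $d$, $\mathbb{E}_{\bar\pi}[|\log q_d(X,X')|]<\infty$. Let $(\alpha^t)_{t\ge1}$ be defined by $\alpha^1=(1/D,\dots,1/D)$ and $\alpha^{t+1}=F(\alpha^t)$, where $F(\alpha)=\big(\mathbb{E}_{\bar\pi}[\alpha_dq_d(X,X')/\sum_{j=1}^D\alpha_jq_j(X,X')]\big)_{1\le d\le D}$. Then $\lim_{t\to\infty}\alpha^t=\alpha^{\max}$.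
   Context: $\mathcal{S}=\{\alpha\in\mathbb{R}^D:\alpha_d\ge0,\ \sum_d\alpha_d=1\}$; $\mathcal{E}_{\bar\pi}(\alpha)=\mathbb{E}_{\bar\pi}[\log\sum_{d=1}^D\alpha_dq_d(X,X')]$. Standing assumption of the paper's setting: $\mathcal{E}_{\bar\pi}$ is strictly concave on $\mathcal{S}$; $\alpha^{\max}$ denotes its unique global maximizer on $\mathcal{S}$ (equivalently, the weight vector minimizing the Kullback divergence between $\bar\pi$ and $\pi(dx)\sum_d\alpha_dQ_d(x,dx')$). *)

theory Defs
  imports "HOL-Analysis.Analysis" "HOL-Probability.Probability"
begin

text \<open>Weight vectors are indexed by a finite type 'd, so D = CARD('d).\<close>

definition weight_simplex :: "(real^'d::finite) set" where
  "weight_simplex = {a. (\<forall>d. 0 \<le> a $ d) \<and> (\<Sum>d\<in>UNIV. a $ d) = 1}"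

definition uniform_weights :: "real^'d::finite" where
  "uniform_weights = (\<chi> d. 1 / real CARD('d))"

definition strictly_concave_on :: "'v::real_vector set \<Rightarrow> ('v \<Rightarrow> real) \<Rightarrow> bool" where
  "strictly_concave_on S f \<longleftrightarrow>
     (\<forall>x\<in>S. \<forall>y\<in>S. x \<noteq> y \<longrightarrow> (\<forall>u::real. 0 < u \<and> u < 1 \<longrightarrow>
        f ((1 - u) *\<^sub>R x + u *\<^sub>R y) > (1 - u) * f x + u * f y))"

definition pibar :: "'a measure \<Rightarrow> ('a \<Rightarrow> real) \<Rightarrow> ('a \<times> 'a) measure" where
  "pibar M p = density (M \<Otimes>\<^sub>M M) (\<lambda>z. ennreal (p (fst z) * p (snd z)))"

definition mixture :: "('d::finite \<Rightarrow> 'a \<Rightarrow> 'a \<Rightarrow> real) \<Rightarrow> real^'d \<Rightarrow> 'a \<times> 'a \<Rightarrow> real" where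
  "mixture q a z = (\<Sum>j\<in>UNIV. a $ j * q j (fst z) (snd z))"

definition Ecrit :: "'a measure \<Rightarrow> ('a \<Rightarrow> real) \<Rightarrow> ('d::finite \<Rightarrow> 'a \<Rightarrow> 'a \<Rightarrow> real) \<Rightarrow> real^'d \<Rightarrow> real" where
  "Ecrit M p q a = (\<integral>z. ln (mixture q a z) \<partial>pibar M p)"

definition Fmap :: "'a measure \<Rightarrow> ('a \<Rightarrow> real) \<Rightarrow> ('d::finite \<Rightarrow> 'a \<Rightarrow> 'a \<Rightarrow> real) \<Rightarrow> real^'d \<Rightarrow> real^'d" where
  "Fmap M p q a = (\<chi> d. \<integral>z. a $ d * q d (fst z) (snd z) / mixture q a z \<partial>pibar M p)"

end

theory Submission
  imports Defs
begin

locale setting =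
  fixes M :: "'a measure" and p :: "'a \<Rightarrow> real"
    and q :: "'d::finite \<Rightarrow> 'a \<Rightarrow> 'a \<Rightarrow> real"
  assumes sigma_finite: "sigma_finite_measure M"
    and p_meas: "p \<in> borel_measurable M"
    and p_nonneg: "\<forall>x\<in>space M. 0 \<le> p x"
    and p_dens: "(\<integral>\<^sup>+ x. ennreal (p x) \<partial>M) = 1"
    and q_meas: "\<forall>d. (\<lambda>z. q d (fst z) (snd z)) \<in> borel_measurable (M \<Otimes>\<^sub>M M)"
    and q_nonneg: "\<forall>d. \<forall>x\<in>space M. \<forall>y\<in>space M. 0 \<le> q d x y"
    and A1: "\<forall>d. emeasure (pibar M p) {z \<in> space (M \<Otimes>\<^sub>M M). q d (fst z) (snd z) = 0} = 0"
    and A2: "\<forall>d. integrable (pibar M p) (\<lambda>z. \<bar>ln (q d (fst z) (snd z))\<bar>)"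
begin

abbreviation "P \<equiv> pibar M p"

lemma sets_P[simp]: "sets P = sets (M \<Otimes>\<^sub>M M)"
  by (simp add: pibar_def)
lemma space_P[simp]: "space P = space (M \<Otimes>\<^sub>M M)"
  by (simp add: pibar_def)

lemma Q_meas[measurable]: "(\<lambda>z. q d (fst z) (snd z)) \<in> borel_measurable P"
  by (subst measurable_cong_sets[OF sets_P refl]) (rule q_meas[rule_format])

lemma prob_P: "prob_space P"
proof
  interpret sigma_finite_measure M by (rule sigma_finite)
  have pm[measurable]: "p \<in> borel_measurable M" by (rule p_meas)
  have "emeasure P (space P) = (\<integral>\<^sup>+ z. ennreal (p (fst z) * p (snd z)) * indicator (space (M \<Otimes>\<^sub>M M)) z \<partial>(M \<Otimes>\<^sub>M M))"
    unfolding pibar_def by (subst emeasure_density) auto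
  also have "\<dots> = (\<integral>\<^sup>+ z. ennreal (p (fst z)) * ennreal (p (snd z)) \<partial>(M \<Otimes>\<^sub>M M))"
    by (intro nn_integral_cong) (auto simp: space_pair_measure p_nonneg ennreal_mult)
  also have "\<dots> = (\<integral>\<^sup>+ x. \<integral>\<^sup>+ y. ennreal (p x) * ennreal (p y) \<partial>M \<partial>M)"
    by (subst nn_integral_fst[symmetric]) auto
  also have "\<dots> = (\<integral>\<^sup>+ x. ennreal (p x) \<partial>M)"
    by (simp add: nn_integral_cmult p_dens)
  also have "\<dots> = 1" by (rule p_dens)
  finally show "emeasure P (space P) = 1" .
qed


interpretation P: prob_space "pibar M p" by (rule prob_P)

lemma AE_pos: "AE z in P. \<forall>d. 0 < q d (fst z) (snd z)"
proof -
  have "AE z in P. q d (fst z) (snd z) \<noteq> 0" for d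
  proof (rule AE_I')
    show "{z \<in> space (M \<Otimes>\<^sub>M M). q d (fst z) (snd z) = 0} \<in> null_sets P"
    proof -
      have "{z \<in> space P. q d (fst z) (snd z) = 0} \<in> sets P" by measurable
      then show ?thesis using A1 by (simp add: null_sets_def)
    qed
  qed auto
  moreover have "AE z in P. 0 \<le> q d (fst z) (snd z)" for d
    using q_nonneg by (intro AE_I2) (auto simp: space_pair_measure)
  ultimately have c: "AE z in P. q d (fst z) (snd z) \<noteq> 0 \<and> 0 \<le> q d (fst z) (snd z)" for d
    by (simp add: AE_conj_iff)
  have "AE z in P. q d (fst z) (snd z) > 0" for d
    using c[of d] by (rule eventually_mono) auto
  then show ?thesis by (simp add: AE_finite_all[of UNIV, simplified])
qed

lemma mix_meas[measurable]: "(\<lambda>z. mixture q a z) \<in> borel_measurable P"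
  unfolding mixture_def by measurable

lemma simplex_big: assumes "(a::real^'d) \<in> weight_simplex" shows "\<exists>k. 1 / real CARD('d) \<le> a $ k"
proof (rule ccontr)
  assume "\<not> ?thesis"
  then have "\<forall>k. a $ k < 1 / real CARD('d)" by (simp add: not_le)
  then have "(\<Sum>k\<in>UNIV. a $ k) < (\<Sum>k\<in>(UNIV::'d set). 1 / real CARD('d))"
    using sum_strict_mono[of "UNIV::'d set" "\<lambda>k. a $ k" "\<lambda>k. 1/real CARD('d)"] by simp
  then show False using assms by (simp add: weight_simplex_def)
qed

lemma simplex_le1: assumes "(a::real^'d) \<in> weight_simplex" shows "a $ k \<le> 1"
proof -
  have "a $ k \<le> (\<Sum>j\<in>UNIV. a $ j)"
    using assms by (intro member_le_sum) (auto simp: weight_simplex_def)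
  then show ?thesis using assms by (simp add: weight_simplex_def)
qed

lemma mix_pos: assumes "a \<in> weight_simplex" "\<forall>d. 0 < q d (fst z) (snd z)"
  shows "0 < mixture q a z"
proof -
  obtain k where k: "1 / real CARD('d) \<le> a $ k" using simplex_big[OF assms(1)] by auto
  have "0 < a $ k" using k by (rule less_le_trans[rotated]) simp
  then have "0 < a $ k * q k (fst z) (snd z)" using assms(2) by simp
  also have "\<dots> \<le> mixture q a z" unfolding mixture_def
    using assms by (intro member_le_sum) (auto simp: weight_simplex_def less_imp_le)
  finally show ?thesis .
qed

definition B :: "'a \<times> 'a \<Rightarrow> real" where
  "B z = ln (real CARD('d)) + (\<Sum>d\<in>(UNIV::'d set). \<bar>ln (q d (fst z) (snd z))\<bar>)"

lemma B_int: "integrable P B"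
  unfolding B_def using A2 by (intro Bochner_Integration.integrable_add Bochner_Integration.integrable_sum) auto

lemma ln_mix_bound: assumes "a \<in> weight_simplex" "\<forall>d. 0 < q d (fst z) (snd z)"
  shows "\<bar>ln (mixture q a z)\<bar> \<le> B z"
proof -
  let ?Q = "\<lambda>d. q d (fst z) (snd z)"
  have mp: "0 < mixture q a z" by (rule mix_pos[OF assms])
  have sabs: "\<bar>ln (?Q k)\<bar> \<le> (\<Sum>d\<in>UNIV. \<bar>ln (?Q d)\<bar>)" for k
    by (intro member_le_sum) auto
  obtain k where k: "1 / real CARD('d) \<le> a $ k" using simplex_big[OF assms(1)] by auto
  have "?Q k / real CARD('d) \<le> a $ k * ?Q k"
    using mult_right_mono[OF k, of "?Q k"] assms(2)[rule_format, of k] by simp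
  also have "\<dots> \<le> mixture q a z" unfolding mixture_def
    using assms by (intro member_le_sum) (auto simp: weight_simplex_def less_imp_le)
  finally have lo: "?Q k / real CARD('d) \<le> mixture q a z" .
  have "ln (?Q k / real CARD('d)) \<le> ln (mixture q a z)"
    using lo mp assms(2)[rule_format, of k] by simp
  then have lo2: "ln (?Q k) - ln (real CARD('d)) \<le> ln (mixture q a z)"
    using assms(2)[rule_format, of k] by (simp add: ln_div)
  have "Max (range ?Q) \<in> range ?Q" by (rule Max_in) auto
  then obtain m where m1: "Max (range ?Q) = ?Q m" by (rule rangeE)
  have m0: "?Q m = Max (range ?Q)" using m1 by (rule sym)
  have m: "\<forall>d. ?Q d \<le> ?Q m"
  proof
    fix d have "?Q d \<le> Max (range ?Q)" by (rule Max_ge) auto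
    then show "?Q d \<le> ?Q m" using m0 by linarith
  qed
  have "mixture q a z \<le> (\<Sum>d\<in>UNIV. a $ d * ?Q m)" unfolding mixture_def
    using assms m by (intro sum_mono mult_left_mono) (auto simp: weight_simplex_def)
  also have "\<dots> = (\<Sum>d\<in>UNIV. a $ d) * ?Q m" by (rule sum_distrib_right[symmetric])
  also have "\<dots> = ?Q m" using assms(1) unfolding weight_simplex_def by simp
  finally have up0: "mixture q a z \<le> ?Q m" .
  have up: "ln (mixture q a z) \<le> ln (?Q m)"
    using up0 mp assms(2)[rule_format, of m] by simp
  have "0 \<le> ln (real CARD('d))" by (rule ln_ge_zero) simp
  show ?thesis unfolding B_def
    using lo2 up sabs[of k] sabs[of m] \<open>0 \<le> ln (real CARD('d))\<close> by linarith
qed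

lemma ln_mix_int: assumes "a \<in> weight_simplex" shows "integrable P (\<lambda>z. ln (mixture q a z))"
proof (rule Bochner_Integration.integrable_bound[OF B_int])
  show "AE z in P. norm (ln (mixture q a z)) \<le> norm (B z)"
    using AE_pos by (rule AE_mp) (auto intro!: AE_I2 dest: ln_mix_bound[OF assms])
qed measurable


lemma term_le: assumes "a \<in> weight_simplex" "\<forall>d. 0 < q d (fst z) (snd z)"
  shows "a $ d * q d (fst z) (snd z) \<le> mixture q a z"
  unfolding mixture_def using assms
  by (intro member_le_sum) (auto simp: weight_simplex_def less_imp_le)

lemma ratio_bound: assumes "a \<in> weight_simplex" "0 < a $ d" "\<forall>d. 0 < q d (fst z) (snd z)"
  shows "\<bar>q d (fst z) (snd z) / mixture q a z\<bar> \<le> 1 / a $ d"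
proof -
  have mp: "0 < mixture q a z" by (rule mix_pos[OF assms(1,3)])
  have t: "a $ d * q d (fst z) (snd z) \<le> mixture q a z" by (rule term_le[OF assms(1,3)])
  have qp: "0 < q d (fst z) (snd z)" using assms(3) by simp
  have "q d (fst z) (snd z) / mixture q a z \<le> 1 / a $ d"
    using t mp qp assms(2) by (simp add: divide_simps mult.commute)
  then show ?thesis using mp qp by simp
qed

lemma ratio_int: assumes "a \<in> weight_simplex" "0 < a $ d"
  shows "integrable P (\<lambda>z. q d (fst z) (snd z) / mixture q a z)"
proof (rule P.integrable_const_bound[where B="1 / a $ d"])
  show "AE z in P. norm (q d (fst z) (snd z) / mixture q a z) \<le> 1 / a $ d"
    using AE_pos by (rule eventually_mono) (simp only: real_norm_def, erule ratio_bound[OF assms])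
qed measurable

lemma wratio_bound: assumes "a \<in> weight_simplex" "\<forall>d. 0 < q d (fst z) (snd z)"
  shows "\<bar>a $ d * q d (fst z) (snd z) / mixture q a z\<bar> \<le> 1"
    "0 \<le> a $ d * q d (fst z) (snd z) / mixture q a z"
proof -
  have mp: "0 < mixture q a z" by (rule mix_pos[OF assms])
  have t: "a $ d * q d (fst z) (snd z) \<le> mixture q a z" by (rule term_le[OF assms])
  have qp: "0 < q d (fst z) (snd z)" using assms(2) by simp
  have ap: "0 \<le> a $ d" using assms(1) by (simp add: weight_simplex_def)
  show nn: "0 \<le> a $ d * q d (fst z) (snd z) / mixture q a z"
    using mp qp ap by simp
  have "a $ d * q d (fst z) (snd z) / mixture q a z \<le> 1"
    using t mp by simp
  then show "\<bar>a $ d * q d (fst z) (snd z) / mixture q a z\<bar> \<le> 1" using nn by simp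
qed

lemma wratio_int: assumes "a \<in> weight_simplex"
  shows "integrable P (\<lambda>z. a $ d * q d (fst z) (snd z) / mixture q a z)"
proof (rule P.integrable_const_bound[where B="1"])
  show "AE z in P. norm (a $ d * q d (fst z) (snd z) / mixture q a z) \<le> 1"
    using AE_pos by (rule eventually_mono) (simp only: real_norm_def, erule wratio_bound[OF assms])
qed measurable

lemma F_nonneg: assumes "a \<in> weight_simplex" shows "0 \<le> Fmap M p q a $ d"
  unfolding Fmap_def
  by simp (rule integral_nonneg_AE, use AE_pos in \<open>rule eventually_mono\<close>, simp add: wratio_bound[OF assms])

lemma F_eq: "Fmap M p q a $ d = a $ d * (\<integral>z. q d (fst z) (snd z) / mixture q a z \<partial>P)"
  unfolding Fmap_def
  using integral_mult_right_zero[of P "a $ d" "\<lambda>z. q d (fst z) (snd z) / mixture q a z"] by simp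

lemma c_pos: assumes "a \<in> weight_simplex" "0 < a $ d"
  shows "0 < (\<integral>z. q d (fst z) (snd z) / mixture q a z \<partial>P)"
proof -
  have int: "integrable P (\<lambda>z. q d (fst z) (snd z) / mixture q a z)" by (rule ratio_int[OF assms])
  have pos: "AE z in P. 0 < q d (fst z) (snd z) / mixture q a z"
    using AE_pos by (rule eventually_mono) (simp add: mix_pos[OF assms(1)])
  then have nn: "AE z in P. 0 \<le> q d (fst z) (snd z) / mixture q a z"
    by (rule eventually_mono) simp
  have ge: "0 \<le> (\<integral>z. q d (fst z) (snd z) / mixture q a z \<partial>P)"
    by (rule integral_nonneg_AE[OF nn])
  have "(\<integral>z. q d (fst z) (snd z) / mixture q a z \<partial>P) \<noteq> 0"
  proof
    assume "(\<integral>z. q d (fst z) (snd z) / mixture q a z \<partial>P) = 0"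
    then have "AE z in P. q d (fst z) (snd z) / mixture q a z = 0"
      using integral_nonneg_eq_0_iff_AE[OF int nn] by simp
    with pos have "AE z in P. False" by (rule eventually_elim2) simp
    then show False by simp
  qed
  with ge show ?thesis by simp
qed

lemma F_simplex: assumes "a \<in> weight_simplex" "\<forall>d. 0 < a $ d"
  shows "Fmap M p q a \<in> weight_simplex" "\<forall>d. 0 < Fmap M p q a $ d"
proof -
  show pos: "\<forall>d. 0 < Fmap M p q a $ d"
    using assms c_pos[OF assms(1)] by (simp add: F_eq)
  have "(\<Sum>d\<in>UNIV. Fmap M p q a $ d)
      = (\<Sum>d\<in>UNIV. \<integral>z. a $ d * q d (fst z) (snd z) / mixture q a z \<partial>P)"
    by (simp add: Fmap_def)
  also have "\<dots> = (\<integral>z. (\<Sum>d\<in>UNIV. a $ d * q d (fst z) (snd z) / mixture q a z) \<partial>P)"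
    by (rule Bochner_Integration.integral_sum[symmetric]) (rule wratio_int[OF assms(1)])
  also have "\<dots> = (\<integral>z. 1 \<partial>P)"
  proof (rule integral_cong_AE)
    show "AE z in P. (\<Sum>d\<in>UNIV. a $ d * q d (fst z) (snd z) / mixture q a z) = 1"
      using AE_pos
    proof (rule eventually_mono)
      fix z assume z: "\<forall>d. 0 < q d (fst z) (snd z)"
      have mp: "0 < mixture q a z" by (rule mix_pos[OF assms(1) z])
      have "(\<Sum>d\<in>UNIV. a $ d * q d (fst z) (snd z) / mixture q a z)
          = (\<Sum>d\<in>UNIV. a $ d * q d (fst z) (snd z)) / mixture q a z"
        by (rule sum_divide_distrib[symmetric])
      also have "\<dots> = 1" using mp by (simp add: mixture_def)
      finally show "(\<Sum>d\<in>UNIV. a $ d * q d (fst z) (snd z) / mixture q a z) = 1" .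
    qed
  qed measurable
  also have "\<dots> = 1" using P.prob_space by simp
  finally show "Fmap M p q a \<in> weight_simplex"
    using pos by (auto simp: weight_simplex_def less_imp_le)
qed


lemma pointwise_key:
  fixes a b :: "real^'d" and cc :: "'d \<Rightarrow> real"
  assumes a: "a \<in> weight_simplex" and b: "b \<in> weight_simplex" and cc: "\<forall>d. 0 < cc d"
    and z: "\<forall>d. 0 < q d (fst z) (snd z)"
  shows "ln (mixture q b z) - ln (mixture q a z) \<le>
     (\<Sum>d\<in>UNIV. b $ d * q d (fst z) (snd z) / mixture q b z * ln (cc d))
     + (\<Sum>d\<in>UNIV. b $ d / cc d * (q d (fst z) (snd z) / mixture q a z)) - 1"
proof -
  define ma where "ma = mixture q a z"
  define mb where "mb = mixture q b z"
  define Q where "Q d = q d (fst z) (snd z)" for d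
  define w where "w d = b $ d * Q d / mb" for d
  have ma: "0 < ma" unfolding ma_def by (rule mix_pos[OF a z])
  have mb: "0 < mb" unfolding mb_def by (rule mix_pos[OF b z])
  have Qp: "0 < Q d" for d unfolding Q_def using z by simp
  have w0: "0 \<le> w d" for d unfolding w_def using b Qp[of d] mb by (simp add: weight_simplex_def less_imp_le)
  have wsum: "(\<Sum>d\<in>UNIV. w d) = 1"
  proof -
    have "(\<Sum>d\<in>UNIV. w d) = (\<Sum>d\<in>UNIV. b $ d * Q d) / mb"
      unfolding w_def by (rule sum_divide_distrib[symmetric])
    also have "\<dots> = 1" using mb unfolding mb_def Q_def mixture_def by simp
    finally show ?thesis .
  qed
  have each: "w d * (ln mb - ln ma) \<le> w d * ln (cc d) + b $ d / cc d * (Q d / ma) - w d" for d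
  proof -
    have pos: "0 < mb / (ma * cc d)" using ma mb cc[rule_format, of d] by simp
    have "ln (mb / (ma * cc d)) \<le> mb / (ma * cc d) - 1" by (rule ln_le_minus_one[OF pos])
    moreover have "ln (mb / (ma * cc d)) = ln mb - ln ma - ln (cc d)"
      using ma mb cc[rule_format, of d] by (simp add: ln_div ln_mult)
    ultimately have "ln mb - ln ma - ln (cc d) \<le> mb / (ma * cc d) - 1" by simp
    then have h1: "w d * (ln mb - ln ma - ln (cc d)) \<le> w d * (mb / (ma * cc d) - 1)"
      by (rule mult_left_mono[OF _ w0])
    have h2: "w d * (mb / (ma * cc d)) = b $ d / cc d * (Q d / ma)"
      unfolding w_def using mb ma cc[rule_format, of d] by (simp add: field_simps)
    have "w d * (ln mb - ln ma) - w d * ln (cc d) \<le> w d * (mb / (ma * cc d)) - w d"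
      using h1 by (simp only: right_diff_distrib mult_1_right)
    then show ?thesis using h2 by linarith
  qed
  have "ln mb - ln ma = (\<Sum>d\<in>UNIV. w d * (ln mb - ln ma))"
    using wsum by (simp add: sum_distrib_right[symmetric])
  also have "\<dots> \<le> (\<Sum>d\<in>UNIV. w d * ln (cc d) + b $ d / cc d * (Q d / ma) - w d)"
    by (rule sum_mono) (rule each)
  also have "\<dots> = (\<Sum>d\<in>UNIV. w d * ln (cc d)) + (\<Sum>d\<in>UNIV. b $ d / cc d * (Q d / ma)) - 1"
    using wsum by (simp add: sum.distrib sum_subtractf)
  finally show ?thesis unfolding w_def Q_def ma_def mb_def .
qed

lemma key:
  fixes a b :: "real^'d"
  assumes a: "a \<in> weight_simplex" "\<forall>d. 0 < a $ d" and b: "b \<in> weight_simplex"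
  shows "Ecrit M p q b - Ecrit M p q a \<le>
    (\<Sum>d\<in>UNIV. Fmap M p q b $ d * ln (\<integral>z. q d (fst z) (snd z) / mixture q a z \<partial>P))"
proof -
  define cc where "cc d = (\<integral>z. q d (fst z) (snd z) / mixture q a z \<partial>P)" for d
  have cc: "\<forall>d. 0 < cc d" unfolding cc_def using c_pos[OF a(1)] a(2) by simp
  define A where "A z = (\<Sum>d\<in>UNIV. b $ d * q d (fst z) (snd z) / mixture q b z * ln (cc d))" for z
  define C where "C z = (\<Sum>d\<in>UNIV. b $ d / cc d * (q d (fst z) (snd z) / mixture q a z))" for z
  have intA: "integrable P A" unfolding A_def
    by (intro Bochner_Integration.integrable_sum integrable_mult_left wratio_int[OF b])
  have intC: "integrable P C" unfolding C_def
    by (intro Bochner_Integration.integrable_sum integrable_mult_right ratio_int[OF a(1)]) (simp add: a(2))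
  have IA: "integral\<^sup>L P A = (\<Sum>d\<in>UNIV. Fmap M p q b $ d * ln (cc d))"
  proof -
    have "integral\<^sup>L P A = (\<Sum>d\<in>UNIV. \<integral>z. b $ d * q d (fst z) (snd z) / mixture q b z * ln (cc d) \<partial>P)"
      unfolding A_def by (rule Bochner_Integration.integral_sum) (intro integrable_mult_left wratio_int[OF b])
    also have "\<dots> = (\<Sum>d\<in>UNIV. (\<integral>z. b $ d * q d (fst z) (snd z) / mixture q b z \<partial>P) * ln (cc d))"
      by (rule sum.cong[OF refl]) (rule integral_mult_left_zero)
    also have "\<dots> = (\<Sum>d\<in>UNIV. Fmap M p q b $ d * ln (cc d))"
      by (simp only: Fmap_def vec_lambda_beta)
    finally show ?thesis .
  qed
  have IC: "integral\<^sup>L P C = (\<Sum>d\<in>UNIV. b $ d)"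
  proof -
    have "integral\<^sup>L P C = (\<Sum>d\<in>UNIV. \<integral>z. b $ d / cc d * (q d (fst z) (snd z) / mixture q a z) \<partial>P)"
      unfolding C_def by (rule Bochner_Integration.integral_sum) (intro integrable_mult_right ratio_int[OF a(1)], simp add: a(2))
    also have "\<dots> = (\<Sum>d\<in>UNIV. b $ d / cc d * cc d)"
      unfolding cc_def by (rule sum.cong[OF refl]) (rule integral_mult_right_zero)
    also have "\<dots> = (\<Sum>d\<in>UNIV. b $ d)"
      using cc by (intro sum.cong[OF refl]) (simp add: less_imp_neq[symmetric])
    finally show ?thesis .
  qed
  have "Ecrit M p q b - Ecrit M p q a = (\<integral>z. ln (mixture q b z) - ln (mixture q a z) \<partial>P)"
    unfolding Ecrit_def
    by (rule Bochner_Integration.integral_diff[symmetric]) (auto intro: ln_mix_int a b)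
  also have "\<dots> \<le> (\<integral>z. A z + C z - 1 \<partial>P)"
  proof (rule integral_mono_AE)
    show "integrable P (\<lambda>z. ln (mixture q b z) - ln (mixture q a z))"
      by (intro Bochner_Integration.integrable_diff ln_mix_int a b)
    show "integrable P (\<lambda>z. A z + C z - 1)"
      by (intro Bochner_Integration.integrable_diff Bochner_Integration.integrable_add intA intC) simp
    show "AE z in P. ln (mixture q b z) - ln (mixture q a z) \<le> A z + C z - 1"
      using AE_pos by (rule eventually_mono) (unfold A_def C_def, rule pointwise_key[OF a(1) b cc])
  qed
  also have "(\<integral>z. A z + C z - 1 \<partial>P) = integral\<^sup>L P A + integral\<^sup>L P C - 1"
    using intA intC P.prob_space by simp
  also have "\<dots> = (\<Sum>d\<in>UNIV. Fmap M p q b $ d * ln (cc d))"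
    using b by (simp add: IA IC weight_simplex_def)
  finally show ?thesis unfolding cc_def .
qed


lemma Ecrit_cont: "continuous_on weight_simplex (Ecrit M p q)"
proof (rule continuous_on_sequentiallyI)
  fix u :: "nat \<Rightarrow> real^'d" and a :: "real^'d"
  assume u: "\<forall>n. u n \<in> weight_simplex" and a: "a \<in> weight_simplex" and lim: "u \<longlonglongrightarrow> a"
  show "(\<lambda>n. Ecrit M p q (u n)) \<longlonglongrightarrow> Ecrit M p q a"
    unfolding Ecrit_def
  proof (rule integral_dominated_convergence[where w=B])
    show "(\<lambda>z. ln (mixture q a z)) \<in> borel_measurable P" by measurable
    show "\<And>n. (\<lambda>z. ln (mixture q (u n) z)) \<in> borel_measurable P" by measurable
    show "integrable P B" by (rule B_int)
    show "AE z in P. (\<lambda>n. ln (mixture q (u n) z)) \<longlonglongrightarrow> ln (mixture q a z)"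
      using AE_pos
    proof (rule eventually_mono)
      fix z assume z: "\<forall>d. 0 < q d (fst z) (snd z)"
      have "(\<lambda>n. mixture q (u n) z) \<longlonglongrightarrow> mixture q a z" unfolding mixture_def
        by (intro tendsto_intros lim)
      then show "(\<lambda>n. ln (mixture q (u n) z)) \<longlonglongrightarrow> ln (mixture q a z)"
        by (rule tendsto_ln) (use mix_pos[OF a z] in simp)
    qed
    show "AE z in P. norm (ln (mixture q (u n) z)) \<le> B z" for n
      using AE_pos by (rule eventually_mono) (simp only: real_norm_def, erule ln_mix_bound[OF u[rule_format]])
  qed
qed

lemma compact_simplex: "compact (weight_simplex :: (real^'d) set)"
  unfolding compact_eq_bounded_closed
proof
  show "bounded (weight_simplex :: (real^'d) set)"
    unfolding bounded_iff
  proof (intro exI ballI)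
    fix x :: "real^'d" assume x: "x \<in> weight_simplex"
    have "norm x \<le> (\<Sum>i\<in>UNIV. \<bar>x $ i\<bar>)" by (rule norm_le_l1_cart)
    also have "\<dots> = (\<Sum>i\<in>UNIV. x $ i)" using x by (simp add: weight_simplex_def)
    also have "\<dots> = 1" using x by (simp add: weight_simplex_def)
    finally show "norm x \<le> 1" .
  qed
  show "closed (weight_simplex :: (real^'d) set)"
    unfolding weight_simplex_def
    by (intro closed_Collect_conj closed_Collect_all closed_Collect_le closed_Collect_eq continuous_intros)
qed

lemma simplex_convex: assumes "x \<in> weight_simplex" "y \<in> weight_simplex" "0 \<le> u" "u \<le> 1"
  shows "(1 - u) *\<^sub>R x + u *\<^sub>R y \<in> (weight_simplex :: (real^'d) set)"
  using assms by (simp add: weight_simplex_def sum.distrib sum_distrib_left[symmetric])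


lemma strict_lt:
  assumes strict_conc: "strictly_concave_on weight_simplex (Ecrit M p q)"
    and amax_in: "amax \<in> weight_simplex"
    and amax_max: "\<forall>a\<in>weight_simplex. Ecrit M p q a \<le> Ecrit M p q amax"
    and a: "a \<in> weight_simplex" and ne: "a \<noteq> amax"
  shows "Ecrit M p q a < Ecrit M p q amax"
proof -
  let ?m = "(1 - 1/2) *\<^sub>R a + (1/2::real) *\<^sub>R amax"
  have "Ecrit M p q ?m > (1 - 1/2) * Ecrit M p q a + (1/2) * Ecrit M p q amax"
    using strict_conc[unfolded strictly_concave_on_def, rule_format, OF a amax_in ne, of "1/2"] by simp
  moreover have "?m \<in> weight_simplex" by (rule simplex_convex[OF a amax_in]) auto
  then have "Ecrit M p q ?m \<le> Ecrit M p q amax" using amax_max by blast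
  ultimately have "Ecrit M p q a / 2 + Ecrit M p q amax / 2 < Ecrit M p q amax" by simp
  then show ?thesis by simp
qed

lemma main:
  assumes strict_conc: "strictly_concave_on weight_simplex (Ecrit M p q)"
    and amax_in: "amax \<in> weight_simplex"
    and amax_max: "\<forall>a\<in>weight_simplex. Ecrit M p q a \<le> Ecrit M p q amax"
  shows "(\<lambda>t. (Fmap M p q ^^ t) uniform_weights) \<longlonglongrightarrow> amax"
proof -
  define x where "x t = (Fmap M p q ^^ t) uniform_weights" for t
  have xs: "x t \<in> weight_simplex \<and> (\<forall>d. 0 < x t $ d)" for t
  proof (induction t)
    case 0
    show ?case unfolding x_def by (simp add: uniform_weights_def weight_simplex_def)
  next
    case (Suc t)
    have "x (Suc t) = Fmap M p q (x t)" unfolding x_def by simp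
    then show ?case using F_simplex[of "x t"] Suc by simp
  qed
  define w where "w d = Fmap M p q amax $ d" for d
  have w0: "0 \<le> w d" for d unfolding w_def by (rule F_nonneg[OF amax_in])
  define K where "K t = - (\<Sum>d\<in>UNIV. w d * ln (x t $ d))" for t
  have K0: "0 \<le> K t" for t
  proof -
    have "w d * ln (x t $ d) \<le> 0" for d
    proof -
      have "x t $ d \<le> 1" using xs[of t] by (simp add: simplex_le1)
      then have "ln (x t $ d) \<le> 0" using xs[of t] by simp
      then show ?thesis using w0[of d] by (simp add: mult_nonneg_nonpos)
    qed
    then have "(\<Sum>d\<in>UNIV. w d * ln (x t $ d)) \<le> 0" by (simp add: sum_nonpos)
    then show ?thesis unfolding K_def by simp
  qed
  define g where "g t = Ecrit M p q amax - Ecrit M p q (x t)" for t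
  have g0: "0 \<le> g t" for t unfolding g_def using amax_max xs[of t] by auto
  have gK: "g t \<le> K t - K (Suc t)" for t
  proof -
    define cc where "cc d = (\<integral>z. q d (fst z) (snd z) / mixture q (x t) z \<partial>P)" for d
    have ccp: "0 < cc d" for d unfolding cc_def using c_pos[of "x t" d] xs[of t] by simp
    have xS: "x (Suc t) = Fmap M p q (x t)" unfolding x_def by simp
    have "ln (cc d) = ln (x (Suc t) $ d) - ln (x t $ d)" for d
    proof -
      have "x (Suc t) $ d = x t $ d * cc d" unfolding xS cc_def by (rule F_eq)
      moreover have "0 < x t $ d" using xs[of t] by blast
      ultimately show ?thesis using ccp[of d] by (simp add: ln_mult)
    qed
    then have "(\<Sum>d\<in>UNIV. Fmap M p q amax $ d * ln (cc d)) = K t - K (Suc t)"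
      unfolding K_def w_def by (simp add: right_diff_distrib sum_subtractf)
    moreover have "g t \<le> (\<Sum>d\<in>UNIV. Fmap M p q amax $ d * ln (cc d))"
      unfolding g_def cc_def using key[of "x t" amax] xs[of t] amax_in by simp
    ultimately show ?thesis by simp
  qed
  have "decseq K" unfolding decseq_Suc_iff using gK g0 by (metis diff_ge_0_iff_ge order_trans)
  then obtain L where L: "K \<longlonglongrightarrow> L" using decseq_convergent[of K 0] K0 by blast
  have "(\<lambda>t. K t - K (Suc t)) \<longlonglongrightarrow> L - L"
    by (intro tendsto_diff L) (rule LIMSEQ_Suc[OF L])
  then have "(\<lambda>t. K t - K (Suc t)) \<longlonglongrightarrow> 0" by simp
  then have "g \<longlonglongrightarrow> 0"
    by (rule tendsto_sandwich[rotated 2, OF tendsto_const]) (auto simp: g0 gK)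
  then have "(\<lambda>t. Ecrit M p q amax - g t) \<longlonglongrightarrow> Ecrit M p q amax - 0"
    by (intro tendsto_diff tendsto_const)
  then have Elim: "(\<lambda>t. Ecrit M p q (x t)) \<longlonglongrightarrow> Ecrit M p q amax"
    unfolding g_def by simp
  show ?thesis
    unfolding x_def[symmetric] tendsto_iff
  proof (intro allI impI)
    fix e :: real assume e: "0 < e"
    define S where "S = weight_simplex \<inter> {a. e \<le> dist a amax}"
    show "\<forall>\<^sub>F t in sequentially. dist (x t) amax < e"
    proof (cases "S = {}")
      case True
      have "dist (x t) amax < e" for t
      proof (rule ccontr)
        assume "\<not> dist (x t) amax < e"
        then have "x t \<in> S" using xs[of t] unfolding S_def by auto
        then show False using True by blast
      qed
      then show ?thesis by (intro always_eventually allI)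
    next
      case False
      have cS: "compact S" unfolding S_def
        by (intro compact_Int_closed compact_simplex closed_Collect_le continuous_intros)
      have contS: "continuous_on S (Ecrit M p q)"
        by (rule continuous_on_subset[OF Ecrit_cont]) (auto simp: S_def)
      obtain a0 where a0: "a0 \<in> S" "\<forall>y\<in>S. Ecrit M p q y \<le> Ecrit M p q a0"
        using continuous_attains_sup[OF cS False contS] by blast
      have "a0 \<noteq> amax" using a0(1) e unfolding S_def by auto
      then have lt: "Ecrit M p q a0 < Ecrit M p q amax"
        using strict_lt[OF strict_conc amax_in amax_max] a0(1) unfolding S_def by auto
      have "\<forall>\<^sub>F t in sequentially. dist (Ecrit M p q (x t)) (Ecrit M p q amax) < Ecrit M p q amax - Ecrit M p q a0"
        using Elim lt unfolding tendsto_iff by simp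
      then show ?thesis
      proof (rule eventually_mono)
        fix t assume t: "dist (Ecrit M p q (x t)) (Ecrit M p q amax) < Ecrit M p q amax - Ecrit M p q a0"
        show "dist (x t) amax < e"
        proof (rule ccontr)
          assume "\<not> dist (x t) amax < e"
          then have "x t \<in> S" using xs[of t] unfolding S_def by auto
          then have "Ecrit M p q (x t) \<le> Ecrit M p q a0" using a0(2) by blast
          then show False using t by (simp add: dist_real_def)
        qed
      qed
    qed
  qed
qed

end

theorem proposition4p3:
  fixes M :: "'a measure" and p :: "'a \<Rightarrow> real"
    and q :: "'d::finite \<Rightarrow> 'a \<Rightarrow> 'a \<Rightarrow> real"
    and amax :: "real^'d"
  assumes sigma_finite: "sigma_finite_measure M"
    and p_meas: "p \<in> borel_measurable M"
    and p_nonneg: "\<forall>x\<in>space M. 0 \<le> p x"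
    and p_dens: "(\<integral>\<^sup>+ x. ennreal (p x) \<partial>M) = 1"
    and q_meas: "\<forall>d. (\<lambda>z. q d (fst z) (snd z)) \<in> borel_measurable (M \<Otimes>\<^sub>M M)"
    and q_nonneg: "\<forall>d. \<forall>x\<in>space M. \<forall>y\<in>space M. 0 \<le> q d x y"
    and q_dens: "\<forall>d. \<forall>x\<in>space M. (\<integral>\<^sup>+ y. ennreal (q d x y) \<partial>M) = 1"
    and A1: "\<forall>d. emeasure (pibar M p) {z \<in> space (M \<Otimes>\<^sub>M M). q d (fst z) (snd z) = 0} = 0"
    and A2: "\<forall>d. integrable (pibar M p) (\<lambda>z. \<bar>ln (q d (fst z) (snd z))\<bar>)"
    and strict_conc: "strictly_concave_on weight_simplex (Ecrit M p q)"
    and amax_in: "amax \<in> weight_simplex"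
    and amax_max: "\<forall>a\<in>weight_simplex. Ecrit M p q a \<le> Ecrit M p q amax"
  shows "(\<lambda>t. (Fmap M p q ^^ t) uniform_weights) \<longlonglongrightarrow> amax"
proof -
  have "setting M p q" unfolding setting_def
    using sigma_finite p_meas p_nonneg p_dens q_meas q_nonneg A1 A2 by blast
  then show ?thesis by (rule setting.main[OF _ strict_conc amax_in amax_max])
qed

end
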